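(* Let $A>0$. There exist constants $R_A\ge1$ and $B_A$, depending only on $A$, such that for every Sawtooth model with $n\ge2$ upper particles for which $f_1,g_1,f_n,g_n$ each integrate to $1$ and are bounded by $A$ in sup norm, the map $$[0,1/R_A]\to(C([0,1]),\|\cdot\|_\infty),\qquad y\mapsto F_{X_I\mid X_F=y}$$ is $B_A$-Lipschitz.
   Context: A (type $--$) Sawtooth model with $n\ge1$ upper particles is specified by functions $f_1,g_1,\dots,f_n,g_n:[0,1]\to[0,\infty)$, each nondecreasing, $C^1$ and not identically zero. It is the probability space $[0,1]^{n+1}\times[0,1]^n$ with probability density at $(x_1,\dots,x_{n+1},y_1,\dots,y_n)$ equal to $\frac{1}{\mathcal V}\prod_{i=1}^n\mathbf 1_{\{x_i\le y_i\}}\mathbf 1_{\{x_{i+1}\le y_i\}}f_i(y_i-x_i)\,g_i(y_i-x_{i+1})$, $\mathcal V$ being the normalizing constant; lower particles $X_1,\dots,X_{n+1}$, upper particles $Y_1,\dots,Y_n$; $X_I:=X_1$, $X_F:=X_{n+1}$. $F_{X_I\mid X_F=y}(t)=\mathbb P(X_I\le t\mid X_F=y)$ is the conditional cumulative distribution function computed from the joint density. *)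

theory Defs
  imports "HOL-Analysis.Analysis"
begin

definition C1_on_unit :: "(real \<Rightarrow> real) \<Rightarrow> bool" where
  "C1_on_unit h \<longleftrightarrow> (\<exists>h'. continuous_on {0..1} h' \<and>
      (\<forall>x\<in>{0..1}. (h has_real_derivative h' x) (at x within {0..1})))"

definition sawtooth_weight_fun :: "(real \<Rightarrow> real) \<Rightarrow> bool" where
  "sawtooth_weight_fun h \<longleftrightarrow> (\<forall>x\<in>{0..1}. 0 \<le> h x) \<and> mono_on {0..1} h \<and>
      C1_on_unit h \<and> (\<exists>x\<in>{0..1}. h x \<noteq> 0)"

text \<open>Unnormalised joint density of the (--) Sawtooth model with n upper particles,
  lower particles x 1, ..., x (n+1), upper particles y 1, ..., y n.\<close>
definition sawtooth_density ::
  "nat \<Rightarrow> (nat \<Rightarrow> real \<Rightarrow> real) \<Rightarrow> (nat \<Rightarrow> real \<Rightarrow> real) \<Rightarrow>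
   (nat \<Rightarrow> real) \<Rightarrow> (nat \<Rightarrow> real) \<Rightarrow> real" where
  "sawtooth_density n f g x y =
     (\<Prod>i\<in>{1..n+1}. indicator {0..1} (x i)) * (\<Prod>i\<in>{1..n}. indicator {0..1} (y i)) *
     (\<Prod>i\<in>{1..n}. indicator {..y i} (x i) * indicator {..y i} (x (i+1)) *
                   f i (y i - x i) * g i (y i - x (i+1)))"

text \<open>Integral over all particles except X_F = x (n+1), which is fixed to s,
  of the density times a weight depending on X_I = x 1.\<close>
definition sawtooth_slice_integral ::
  "nat \<Rightarrow> (nat \<Rightarrow> real \<Rightarrow> real) \<Rightarrow> (nat \<Rightarrow> real \<Rightarrow> real) \<Rightarrow> (real \<Rightarrow> real) \<Rightarrow> real \<Rightarrow> real" where
  "sawtooth_slice_integral n f g \<phi> s =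
     (\<integral>xy. \<phi> (fst xy 1) * sawtooth_density n f g ((fst xy)(n+1 := s)) (snd xy)
        \<partial>(PiM {1..n} (\<lambda>_. lborel) \<Otimes>\<^sub>M PiM {1..n} (\<lambda>_. lborel)))"

text \<open>Conditional CDF of X_I given X_F = s, evaluated at t:
  ratio of the joint density integrated over {X_I \<le> t} to the marginal density of X_F at s
  (the normalising constant cancels). Division by 0 yields 0 by HOL convention.\<close>
definition cond_cdf_XI_given_XF ::
  "nat \<Rightarrow> (nat \<Rightarrow> real \<Rightarrow> real) \<Rightarrow> (nat \<Rightarrow> real \<Rightarrow> real) \<Rightarrow> real \<Rightarrow> real \<Rightarrow> real" where
  "cond_cdf_XI_given_XF n f g s t =
     sawtooth_slice_integral n f g (indicator {..t}) s / sawtooth_slice_integral n f g (\<lambda>_. 1) s"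

end

theory Submission
  imports Defs "HOL-Analysis.Analysis"
begin

definition ind01 :: "real \<Rightarrow> real" where "ind01 u = indicator {0..1} u"

definition Rf :: "nat \<Rightarrow> (nat \<Rightarrow> real \<Rightarrow> real) \<Rightarrow> (nat \<Rightarrow> real \<Rightarrow> real) \<Rightarrow> (nat \<Rightarrow> real) \<Rightarrow> (nat \<Rightarrow> real) \<Rightarrow> real" where
  "Rf k f g x y = (\<Prod>i\<in>{1..Suc k}. ind01 (x i)) * (\<Prod>i\<in>{1..Suc k}. ind01 (y i)) *
     (\<Prod>i\<in>{1..Suc k}. indicator {..y i} (x i) * f i (y i - x i)) *
     (\<Prod>i\<in>{1..k}. indicator {..y i} (x (Suc i)) * g i (y i - x (Suc i)))"

definition Ef :: "nat \<Rightarrow> (nat \<Rightarrow> real \<Rightarrow> real) \<Rightarrow> real \<Rightarrow> real \<Rightarrow> real" where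
  "Ef k g a b = ind01 a * indicator {..b} a * g (Suc k) (b - a)"

definition Qf :: "nat \<Rightarrow> (nat \<Rightarrow> real \<Rightarrow> real) \<Rightarrow> (nat \<Rightarrow> real \<Rightarrow> real) \<Rightarrow> real \<Rightarrow> real \<Rightarrow> real \<Rightarrow> real" where
  "Qf k f g a b s = ind01 s * ind01 b * indicator {..b} a * indicator {..b} s *
      f (Suc (Suc k)) (b - a) * g (Suc (Suc k)) (b - s)"

lemma density_factor:
  "sawtooth_density (Suc (Suc k)) f g (x(Suc (Suc k) + 1 := s)) y =
   Rf k f g x y * Ef k g (x (Suc (Suc k))) (y (Suc k)) * Qf k f g (x (Suc (Suc k))) (y (Suc (Suc k))) s"
proof -
  let ?n = "Suc (Suc k)" and ?m = "Suc k"
  let ?x = "x(?n + 1 := s)"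
  have 1: "(\<Prod>i\<in>{1..?n+1}. indicator {0..1} (?x i)) = (\<Prod>i\<in>{1..?m}. ind01 (x i)) * ind01 (x ?n) * ind01 s"
  proof -
    have "(\<Prod>i\<in>{1..?n+1}. indicator {0..1} (?x i)) = (\<Prod>i\<in>{1..?m}. indicator {0..1} (?x i)) * indicator {0..1} (?x ?n) * indicator {0..1} (?x (?n+1))"
      by (simp add: prod.cl_ivl_Suc)
    also have "(\<Prod>i\<in>{1..?m}. indicator {0..1} (?x i)) = (\<Prod>i\<in>{1..?m}. ind01 (x i))"
      by (rule prod.cong) (auto simp: ind01_def)
    finally show ?thesis by (simp add: ind01_def)
  qed
  have 2: "(\<Prod>i\<in>{1..?n}. indicator {0..1} (y i)) = (\<Prod>i\<in>{1..?m}. ind01 (y i)) * ind01 (y ?n)"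
    by (simp add: prod.cl_ivl_Suc ind01_def)
  let ?F = "\<lambda>i. indicator {..y i} (?x i) * indicator {..y i} (?x (i+1)) * f i (y i - ?x i) * g i (y i - ?x (i+1))"
  have 3: "(\<Prod>i\<in>{1..?n}. ?F i) = (\<Prod>i\<in>{1..?m}. ?F i) * ?F ?n"
    by (simp add: prod.cl_ivl_Suc)
  have 4: "(\<Prod>i\<in>{1..?m}. ?F i) = (\<Prod>i\<in>{1..?m}. indicator {..y i} (x i) * f i (y i - x i)) *
      (\<Prod>i\<in>{1..?m}. indicator {..y i} (x (Suc i)) * g i (y i - x (Suc i)))"
  proof -
    have "(\<Prod>i\<in>{1..?m}. ?F i) = (\<Prod>i\<in>{1..?m}. (indicator {..y i} (x i) * f i (y i - x i)) *
      (indicator {..y i} (x (Suc i)) * g i (y i - x (Suc i))))"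
      by (rule prod.cong) (auto simp: algebra_simps)
    then show ?thesis by (simp add: prod.distrib)
  qed
  have 5: "(\<Prod>i\<in>{1..?m}. indicator {..y i} (x (Suc i)) * g i (y i - x (Suc i))) =
     (\<Prod>i\<in>{1..k}. indicator {..y i} (x (Suc i)) * g i (y i - x (Suc i))) * (indicator {..y ?m} (x ?n) * g ?m (y ?m - x ?n))"
    by (simp add: prod.cl_ivl_Suc)
  show ?thesis
    unfolding sawtooth_density_def 1 2 3 4 5 Rf_def Ef_def Qf_def
    by (simp add: ind01_def algebra_simps)
qed

lemma mfst: "i \<in> I \<Longrightarrow> (\<lambda>xy. fst xy i) \<in> borel_measurable (PiM I (\<lambda>_. lborel) \<Otimes>\<^sub>M N)"
  using measurable_component_singleton[of i I "\<lambda>_. lborel"]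
  by (auto intro!: measurable_compose[OF measurable_fst] simp: measurable_lborel1)
lemma msnd: "i \<in> I \<Longrightarrow> (\<lambda>xy. snd xy i) \<in> borel_measurable (N \<Otimes>\<^sub>M PiM I (\<lambda>_. lborel))"
  using measurable_component_singleton[of i I "\<lambda>_. lborel"]
  by (auto intro!: measurable_compose[OF measurable_snd] simp: measurable_lborel1)
lemma mcomp: fixes u :: "'a \<Rightarrow> real" shows "u \<in> borel_measurable M \<Longrightarrow> continuous_on UNIV h \<Longrightarrow> (\<lambda>x. h (u x)) \<in> borel_measurable M"
  by (auto intro!: measurable_compose[of u M borel h] intro: borel_measurable_continuous_onI)
lemma mcomp2: fixes u v :: "'a \<Rightarrow> real" shows "u \<in> borel_measurable M \<Longrightarrow> v \<in> borel_measurable M \<Longrightarrow> continuous_on UNIV h \<Longrightarrow> (\<lambda>x. h (v x - u x)) \<in> borel_measurable M"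
  by (rule mcomp[of "\<lambda>x. v x - u x"]) (auto intro: borel_measurable_diff)
lemma mind: fixes u v :: "'a \<Rightarrow> real" assumes [measurable]: "u \<in> borel_measurable M" "v \<in> borel_measurable M"
  shows "(\<lambda>x. indicator {..v x} (u x) :: real) \<in> borel_measurable M"
proof -
  have "(\<lambda>x. indicator {..v x} (u x) :: real) = (\<lambda>x. if u x \<le> v x then 1 else 0)" by (auto simp: indicator_def)
  moreover have "(\<lambda>x. if u x \<le> v x then 1 else 0 :: real) \<in> borel_measurable M" by measurable
  ultimately show ?thesis by simp
qed
lemma m01: "u \<in> borel_measurable M \<Longrightarrow> (\<lambda>x. ind01 (u x)) \<in> borel_measurable M"
  unfolding ind01_def by measurable

lemma Rf_meas:
  assumes fc: "\<And>i. continuous_on UNIV (f i)" and gc: "\<And>i. continuous_on UNIV (g i)"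
  and I: "{1..Suc k} \<subseteq> I" and I': "{1..Suc k} \<subseteq> I'"
  shows "(\<lambda>xy. Rf k f g (fst xy) (snd xy)) \<in> borel_measurable (PiM I (\<lambda>_. lborel) \<Otimes>\<^sub>M PiM I' (\<lambda>_. lborel))"
proof -
  have a: "(\<lambda>xy. fst xy i) \<in> borel_measurable (PiM I (\<lambda>_. lborel) \<Otimes>\<^sub>M PiM I' (\<lambda>_. lborel))"
     "(\<lambda>xy. snd xy i) \<in> borel_measurable (PiM I (\<lambda>_. lborel) \<Otimes>\<^sub>M PiM I' (\<lambda>_. lborel))"
    if "i \<in> {1..Suc k}" for i using that I I' by (auto intro!: mfst msnd)
  have b: "(\<lambda>xy. fst xy (Suc i)) \<in> borel_measurable (PiM I (\<lambda>_. lborel) \<Otimes>\<^sub>M PiM I' (\<lambda>_. lborel))"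
    if "i \<in> {1..k}" for i using that I by (auto intro!: mfst)
  have c: "i \<in> {1..k} \<Longrightarrow> i \<in> {1..Suc k}" for i by auto
  show ?thesis unfolding Rf_def
    by (intro borel_measurable_times borel_measurable_prod; auto intro!: m01 mind mcomp2 a b fc gc)
qed

locale oneD =
  fixes F G :: "real \<Rightarrow> real" and A :: real
  assumes Fc: "continuous_on UNIV F" and Gc: "continuous_on UNIV G"
    and Fm: "mono F" and Gm: "mono G"
    and Fn: "\<And>u. 0 \<le> F u" and Gn: "\<And>u. 0 \<le> G u"
    and FA: "\<And>u. F u \<le> A" and GA: "\<And>u. G u \<le> A"
    and Fi: "integral {0..1} F = 1" and Gi: "integral {0..1} G = 1"
    and A1: "1 \<le> A"
begin

definition q :: "real \<Rightarrow> real \<Rightarrow> real \<Rightarrow> real" where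
  "q a b s = ind01 s * ind01 b * indicator {..b} a * indicator {..b} s * F (b - a) * G (b - s)"

definition K :: "real \<Rightarrow> real \<Rightarrow> real" where
  "K a s = (\<integral>b. q a b s \<partial>lborel)"

lemma q_nonneg: "0 \<le> q a b s"
  unfolding q_def ind01_def using Fn Gn by (simp add: indicator_def)

lemma q_le: "q a b s \<le> A * A * ind01 b"
proof -
  have "q a b s \<le> ind01 b * (F (b - a) * G (b - s))"
    unfolding q_def ind01_def using Fn Gn
    by (auto simp: indicator_def mult_le_one)
  also have "\<dots> \<le> ind01 b * (A * A)"
    using Fn Gn FA GA A1 by (intro mult_left_mono mult_mono) (auto simp: ind01_def)
  finally show ?thesis by (simp add: algebra_simps)
qed

lemma ind01_meas[measurable]: "ind01 \<in> borel_measurable borel"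
  unfolding ind01_def by measurable

lemma q_meas2: "(\<lambda>(a, b). q a b s) \<in> borel_measurable (lborel \<Otimes>\<^sub>M lborel)"
proof -
  have [measurable]: "F \<in> borel_measurable borel" "G \<in> borel_measurable borel"
    using Fc Gc by (auto intro: borel_measurable_continuous_onI)
  have *: "(\<lambda>(a, b). q a b s) = (\<lambda>ab. ind01 s * ind01 (snd ab) * indicator {..snd ab} (fst ab) * indicator {..snd ab} s * F (snd ab - fst ab) * G (snd ab - s))"
    by (auto simp: q_def)
  show ?thesis unfolding * 
    by (intro borel_measurable_times borel_measurable_const mind mcomp2 Fc Gc measurable_compose[OF _ ind01_meas]
       measurable_fst'' measurable_snd'' ) (auto simp: measurable_lborel1)
qed

lemma q_meas: "(\<lambda>b. q a b s) \<in> borel_measurable lborel"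
  using measurable_Pair2[OF q_meas2, of a] by simp

lemma q_int: "integrable lborel (\<lambda>b. q a b s)"
proof (rule Bochner_Integration.integrable_bound[OF _ q_meas])
  show "integrable lborel (\<lambda>b. A * A * ind01 b)"
    unfolding ind01_def by (intro integrable_mult_right integrable_real_indicator) auto
  show "AE x in lborel. norm (q a x s) \<le> norm (A * A * ind01 x)"
    using q_nonneg q_le by (auto simp: ind01_def)
qed

lemma K_nonneg: "0 \<le> K a s"
  unfolding K_def by (rule integral_nonneg_AE) (simp add: q_nonneg)

end

lemma lowb:
  fixes H :: "real \<Rightarrow> real" and A v :: real
  assumes Hc: "continuous_on UNIV H" and Hm: "mono H" and Hn: "\<And>u. 0 \<le> H u" and HA: "\<And>u. H u \<le> A"
    and Hi: "integral {0..1} H = 1" and v: "0 \<le> v" "v \<le> 1"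
  shows "1 \<le> H v + (1 - v) * A"
proof -
  have int: "H integrable_on {a..b}" for a b
    by (rule integrable_continuous_interval) (rule continuous_on_subset[OF Hc], auto)
  have "1 = integral {0..v} H + integral {v..1} H"
    using Henstock_Kurzweil_Integration.integral_combine[where f=H and a=0 and c=v and b=1] v int Hi by simp
  also have "integral {0..v} H \<le> integral {0..v} (\<lambda>_. H v)"
    by (rule integral_le[OF int]) (auto intro: monoD[OF Hm])
  also have "\<dots> = v * H v" using v by simp
  also have "\<dots> \<le> H v" using v Hn[of v] by (simp add: mult_left_le_one_le)
  also have "integral {v..1} H \<le> integral {v..1} (\<lambda>_. A)"
    by (rule integral_le[OF int]) (auto intro: HA)
  also have "\<dots> = (1 - v) * A" using v by simp
  finally show ?thesis by simp
qed

context oneD begin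

lemma F_half: "0 \<le> v \<Longrightarrow> v \<le> 1 \<Longrightarrow> 1 - 1/(2*A) \<le> v \<Longrightarrow> 1/2 \<le> F v"
proof -
  assume v: "0 \<le> v" "v \<le> 1" "1 - 1/(2*A) \<le> v"
  have "1 \<le> F v + (1 - v) * A" by (rule lowb[OF Fc Fm Fn FA Fi v(1,2)])
  moreover have "(1 - v) * A \<le> 1/(2*A) * A" using v A1 by (intro mult_right_mono) auto
  moreover have "1/(2*A) * A = 1/2" using A1 by (simp add: field_simps)
  ultimately show ?thesis by linarith
qed

lemma G_half: "0 \<le> v \<Longrightarrow> v \<le> 1 \<Longrightarrow> 1 - 1/(2*A) \<le> v \<Longrightarrow> 1/2 \<le> G v"
proof -
  assume v: "0 \<le> v" "v \<le> 1" "1 - 1/(2*A) \<le> v"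
  have "1 \<le> G v + (1 - v) * A" by (rule lowb[OF Gc Gm Gn GA Gi v(1,2)])
  moreover have "(1 - v) * A \<le> 1/(2*A) * A" using v A1 by (intro mult_right_mono) auto
  moreover have "1/(2*A) * A = 1/2" using A1 by (simp add: field_simps)
  ultimately show ?thesis by linarith
qed

lemma K_low:
  assumes a: "0 \<le> a" "a \<le> 1/(4*A)" and s: "0 \<le> s" "s \<le> 1/(4*A)"
  shows "1/(16*A) \<le> K a s"
proof -
  define e where "e = 1/(4*A)"
  have e: "0 < e" "e \<le> 1/4" "2 * e = 1/(2*A)" using A1 by (auto simp: e_def field_simps)
  have pt: "1/4 * indicator {1-e..1} b \<le> q a b s" for b
  proof (cases "b \<in> {1-e..1}")
    case True
    have h1: "1/2 \<le> F (b - a)" using True a e unfolding e_def[symmetric] by (intro F_half) auto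
    have h2: "1/2 \<le> G (b - s)" using True s e unfolding e_def[symmetric] by (intro G_half) auto
    have "1/4 \<le> F (b - a) * G (b - s)"
      using mult_mono[OF h1 h2] Fn[of "b-a"] by simp
    moreover have "q a b s = F (b - a) * G (b - s)"
      using True a s e unfolding q_def ind01_def e_def[symmetric] by (auto simp: indicator_def)
    ultimately show ?thesis using True by simp
  next
    case False then show ?thesis using q_nonneg by simp
  qed
  have "(\<integral>b. 1/4 * indicator {1-e..1} b \<partial>lborel) \<le> K a s"
    unfolding K_def using e
    by (intro integral_mono q_int pt integrable_mult_right integrable_real_indicator) auto
  moreover have "(\<integral>b. 1/4 * indicator {1-e..1} b \<partial>lborel) = 1/4 * e"
    using e by simp
  ultimately show ?thesis using A1 by (simp add: e_def)
qed

end

context oneD begin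

definition gh :: "real \<Rightarrow> real" where "gh u = indicator {0..} u * G u"

lemma gh_mono: "u \<le> u' \<Longrightarrow> gh u \<le> gh u'"
  unfolding gh_def using Gn monoD[OF Gm, of u u'] by (auto simp: indicator_def)

lemma gh_nonneg: "0 \<le> gh u" unfolding gh_def using Gn by (simp add: indicator_def)

lemma gh_meas[measurable]: "gh \<in> borel_measurable borel"
proof -
  have [measurable]: "G \<in> borel_measurable borel" using Gc by (auto intro: borel_measurable_continuous_onI)
  show ?thesis unfolding gh_def by measurable
qed

lemma qrep: "0 \<le> s \<Longrightarrow> s \<le> 1 \<Longrightarrow> q a b s = (ind01 b * indicator {..b} a * F (b - a)) * gh (b - s)"
  unfolding q_def gh_def ind01_def by (auto simp: indicator_def)

lemma h_int: "integrable lborel (\<lambda>b. ind01 b * gh (b - s))"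
proof (rule Bochner_Integration.integrable_bound)
  show "integrable lborel (\<lambda>b. A * ind01 b)"
    unfolding ind01_def by (intro integrable_mult_right integrable_real_indicator) auto
  show "(\<lambda>b. ind01 b * gh (b - s)) \<in> borel_measurable lborel" by measurable
  show "AE x in lborel. norm (ind01 x * gh (x - s)) \<le> norm (A * ind01 x)"
    using GA Gn A1 by (auto simp: ind01_def gh_def indicator_def)
qed

lemma Gint: assumes s: "0 \<le> s" "s \<le> 1"
  shows "(\<integral>b. ind01 b * gh (b - s) \<partial>lborel) = integral {0..1-s} G"
proof -
  have "(\<integral>b. ind01 b * gh (b - s) \<partial>lborel) = \<bar>1\<bar> *\<^sub>R (\<integral>x. ind01 (s + 1 * x) * gh (s + 1 * x - s) \<partial>lborel)"
    by (rule lborel_integral_real_affine) simp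
  also have "\<dots> = (\<integral>x. indicator {0..1-s} x *\<^sub>R G x \<partial>lborel)"
    using s by (simp, intro Bochner_Integration.integral_cong) (auto simp: ind01_def gh_def indicator_def)
  also have "\<dots> = integral {0..1-s} G"
    using set_borel_integral_eq_integral(2)[OF borel_integrable_atLeastAtMost'[OF continuous_on_subset[OF Gc]]]
    unfolding set_lebesgue_integral_def by auto
  finally show ?thesis .
qed

lemma K_anti: assumes "0 \<le> s1" "s1 \<le> s2" "s2 \<le> 1" shows "K a s2 \<le> K a s1"
  unfolding K_def
proof (rule integral_mono[OF q_int q_int])
  fix b
  show "q a b s2 \<le> q a b s1"
    using assms qrep[of s1 a b] qrep[of s2 a b] gh_mono[of "b - s2" "b - s1"] Fn[of "b-a"]
    by (auto intro!: mult_left_mono simp: ind01_def indicator_def)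
qed

lemma K_lip1: assumes s: "0 \<le> s1" "s1 \<le> s2" "s2 \<le> 1" shows "K a s1 \<le> K a s2 + A * A * (s2 - s1)"
proof -
  have pt: "q a b s1 \<le> q a b s2 + (A * (ind01 b * gh (b - s1)) - A * (ind01 b * gh (b - s2)))" for b
  proof -
    have U: "0 \<le> ind01 b * indicator {..b} a * F (b - a)" "ind01 b * indicator {..b} a * F (b - a) \<le> A * ind01 b"
      using Fn[of "b-a"] FA[of "b-a"] A1 by (auto simp: ind01_def indicator_def)
    have d: "0 \<le> gh (b - s1) - gh (b - s2)" using gh_mono[of "b - s2" "b - s1"] s by simp
    have "q a b s1 - q a b s2 = (ind01 b * indicator {..b} a * F (b - a)) * (gh (b - s1) - gh (b - s2))"
      using qrep[of s1 a b] qrep[of s2 a b] s by (simp add: algebra_simps)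
    also have "\<dots> \<le> (A * ind01 b) * (gh (b - s1) - gh (b - s2))"
      by (rule mult_right_mono[OF U(2) d])
    finally show ?thesis by (simp add: algebra_simps)
  qed
  have "K a s1 \<le> (\<integral>b. q a b s2 + (A * (ind01 b * gh (b - s1)) - A * (ind01 b * gh (b - s2))) \<partial>lborel)"
    unfolding K_def by (intro integral_mono q_int pt Bochner_Integration.integrable_add Bochner_Integration.integrable_diff integrable_mult_right h_int)
  also have "\<dots> = K a s2 + (A * (\<integral>b. ind01 b * gh (b - s1) \<partial>lborel) - A * (\<integral>b. ind01 b * gh (b - s2) \<partial>lborel))"
    unfolding K_def by (simp add: q_int h_int Bochner_Integration.integral_add Bochner_Integration.integral_diff)
  also have "(\<integral>b. ind01 b * gh (b - s1) \<partial>lborel) - (\<integral>b. ind01 b * gh (b - s2) \<partial>lborel) = integral {1-s2..1-s1} G"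
  proof -
    have "integral {0..1-s2} G + integral {1-s2..1-s1} G = integral {0..1-s1} G"
      using s by (intro Henstock_Kurzweil_Integration.integral_combine integrable_continuous_interval continuous_on_subset[OF Gc]) auto
    then show ?thesis using Gint[of s1] Gint[of s2] s by simp
  qed
  then have "A * (\<integral>b. ind01 b * gh (b - s1) \<partial>lborel) - A * (\<integral>b. ind01 b * gh (b - s2) \<partial>lborel) = A * integral {1-s2..1-s1} G"
    by (simp add: algebra_simps)
  also have "integral {1-s2..1-s1} G \<le> integral {1-s2..1-s1} (\<lambda>_. A)"
    by (intro integral_le integrable_continuous_interval continuous_on_subset[OF Gc]) (auto simp: GA)
  also have "\<dots> = A * (s2 - s1)" using s by simp
  finally show ?thesis using A1 by (simp add: algebra_simps mult_left_mono)
qed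

lemma K_lip: assumes "0 \<le> s1" "s1 \<le> 1" "0 \<le> s2" "s2 \<le> 1"
  shows "\<bar>K a s1 - K a s2\<bar> \<le> A * A * \<bar>s1 - s2\<bar>"
proof (cases "s1 \<le> s2")
  case True
  then show ?thesis using K_anti[of s1 s2 a] K_lip1[of s1 s2 a] assms by auto
next
  case False
  then show ?thesis using K_anti[of s2 s1 a] K_lip1[of s2 s1 a] assms by auto
qed

end

interpretation PS: product_sigma_finite "\<lambda>_::nat. lborel::real measure" by standard

locale nice =
  fixes k :: nat and f g :: "nat \<Rightarrow> real \<Rightarrow> real" and A :: real
  assumes fc: "\<And>i. continuous_on UNIV (f i)" and gc: "\<And>i. continuous_on UNIV (g i)"
    and fn: "\<And>i u. 0 \<le> f i u" and gn: "\<And>i u. 0 \<le> g i u"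
    and fm: "\<And>i. mono (f i)" and gm: "\<And>i. mono (g i)"
    and fb: "\<And>i u. f i u \<le> f i 1" and gb: "\<And>i u. g i u \<le> g i 1"
    and fA: "\<And>u. f (Suc (Suc k)) u \<le> A" and gA: "\<And>u. g (Suc (Suc k)) u \<le> A"
    and fi: "integral {0..1} (f (Suc (Suc k))) = 1" and gi: "integral {0..1} (g (Suc (Suc k))) = 1"
    and A1: "1 \<le> A"

sublocale nice \<subseteq> O: oneD "f (Suc (Suc k))" "g (Suc (Suc k))" A
  by standard (auto simp: fc gc fn gn fm gm fA gA fi gi A1)

context nice begin

abbreviation "Mx \<equiv> PiM {1..Suc (Suc k)} (\<lambda>_. lborel::real measure)"
abbreviation "MJ \<equiv> PiM {1..Suc k} (\<lambda>_. lborel::real measure)"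

definition S :: "(real \<Rightarrow> real) \<Rightarrow> real \<Rightarrow> ennreal" where
  "S \<phi> s = (\<integral>\<^sup>+xy. ennreal (\<phi> (fst xy 1) * sawtooth_density (Suc (Suc k)) f g ((fst xy)(Suc (Suc k) + 1 := s)) (snd xy)) \<partial>(Mx \<Otimes>\<^sub>M Mx))"

definition W :: "(real \<Rightarrow> real) \<Rightarrow> (nat \<Rightarrow> real) \<Rightarrow> ennreal" where
  "W \<phi> x = (\<integral>\<^sup>+y. ennreal (\<phi> (x 1) * Rf k f g x y * Ef k g (x (Suc (Suc k))) (y (Suc k))) \<partial>MJ)"

lemma Qf_q: "Qf k f g a b s = O.q a b s"
  unfolding Qf_def O.q_def by simp

lemma sfMJ: "sigma_finite_measure MJ" and sfMx: "sigma_finite_measure Mx"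
  by (auto intro: PS.sigma_finite)

lemma Rf_nonneg: "0 \<le> Rf k f g x y"
  unfolding Rf_def ind01_def using fn gn
  by (intro mult_nonneg_nonneg prod_nonneg) (auto simp: indicator_def)

lemma Ef_nonneg: "0 \<le> Ef k g a b"
  unfolding Ef_def ind01_def using gn by (auto simp: indicator_def)

lemma Ef_meas: "u \<in> borel_measurable M \<Longrightarrow> v \<in> borel_measurable M \<Longrightarrow> (\<lambda>x. Ef k g (u x) (v x)) \<in> borel_measurable M"
  unfolding Ef_def by (intro borel_measurable_times m01 mind mcomp2 gc)

lemma Qf_meas: "u \<in> borel_measurable M \<Longrightarrow> v \<in> borel_measurable M \<Longrightarrow> (\<lambda>x. Qf k f g (u x) (v x) s) \<in> borel_measurable M"
  unfolding Qf_def by (intro borel_measurable_times m01 mind mcomp2 gc fc borel_measurable_const)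
    (auto intro!: mcomp[of "\<lambda>x. v x - s"] gc)

lemma meas_full:
  assumes [measurable]: "\<phi> \<in> borel_measurable borel"
  shows "(\<lambda>xy. \<phi> (fst xy 1) * Rf k f g (fst xy) (snd xy) * Ef k g (fst xy (Suc (Suc k))) (snd xy (Suc k)) *
      Qf k f g (fst xy (Suc (Suc k))) (snd xy (Suc (Suc k))) s) \<in> borel_measurable (Mx \<Otimes>\<^sub>M Mx)"
  by (intro borel_measurable_times Rf_meas fc gc Ef_meas Qf_meas mfst msnd measurable_compose[OF _ assms]) auto

lemma meas_W:
  assumes [measurable]: "\<phi> \<in> borel_measurable borel"
  shows "(\<lambda>xy. \<phi> (fst xy 1) * Rf k f g (fst xy) (snd xy) * Ef k g (fst xy (Suc (Suc k))) (snd xy (Suc k)))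
     \<in> borel_measurable (Mx \<Otimes>\<^sub>M MJ)"
  by (intro borel_measurable_times Rf_meas fc gc Ef_meas mfst msnd measurable_compose[OF _ assms]) auto

lemma W_meas:
  assumes [measurable]: "\<phi> \<in> borel_measurable borel"
  shows "W \<phi> \<in> borel_measurable Mx"
proof -
  have "(\<lambda>xy. ennreal (\<phi> (fst xy 1) * Rf k f g (fst xy) (snd xy) * Ef k g (fst xy (Suc (Suc k))) (snd xy (Suc k))))
     \<in> borel_measurable (Mx \<Otimes>\<^sub>M MJ)"
    using meas_W[OF assms] by measurable
  then show ?thesis unfolding W_def
    by (intro sigma_finite_measure.borel_measurable_nn_integral[OF sfMJ]) (simp add: split_beta')
qed

lemma enn_meas: assumes [measurable]: "u \<in> borel_measurable M" shows "(\<lambda>x. ennreal (u x)) \<in> borel_measurable M"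
  by measurable

lemma K_meas: "(\<lambda>x. ennreal (O.K (x (Suc (Suc k))) s)) \<in> borel_measurable Mx"
proof -
  have "(\<lambda>a. O.K a s) \<in> borel_measurable lborel"
    unfolding O.K_def using O.q_meas2 by (intro lborel.borel_measurable_lebesgue_integral) (simp add: split_beta')
  then have h: "(\<lambda>a. ennreal (O.K a s)) \<in> borel_measurable lborel" by (rule enn_meas)
  show ?thesis
    using measurable_compose[OF measurable_component_singleton[of "Suc (Suc k)" "{1..Suc (Suc k)}" "\<lambda>_. lborel"] h] by simp
qed

end

lemma Rf_upd: "Suc k < j \<Longrightarrow> Rf k f g x (y(j := b)) = Rf k f g x y"
  unfolding Rf_def by (intro arg_cong2[where f="(*)"] prod.cong) auto

lemma Rf_updx: "Suc k < j \<Longrightarrow> Rf k f g (x(j := b)) y = Rf k f g x y"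
  unfolding Rf_def by (intro arg_cong2[where f="(*)"] prod.cong) auto

context nice begin

lemma K_int_eq: "(\<integral>\<^sup>+b. ennreal (Qf k f g a b s) \<partial>lborel) = ennreal (O.K a s)"
  unfolding Qf_q O.K_def by (rule nn_integral_eq_integral[OF O.q_int]) (simp add: O.q_nonneg)

lemma S_repr:
  assumes phim: "\<phi> \<in> borel_measurable borel" and phin: "\<And>u. 0 \<le> \<phi> u"
  shows "S \<phi> s = (\<integral>\<^sup>+x. W \<phi> x * ennreal (O.K (x (Suc (Suc k))) s) \<partial>Mx)"
proof -
  define h where "h x y = \<phi> (x 1) * Rf k f g x y * Ef k g (x (Suc (Suc k))) (y (Suc k)) * Qf k f g (x (Suc (Suc k))) (y (Suc (Suc k))) s" for x y
  have hm: "(\<lambda>xy. ennreal (h (fst xy) (snd xy))) \<in> borel_measurable (Mx \<Otimes>\<^sub>M Mx)"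
    unfolding h_def by (intro enn_meas meas_full phim)
  have "S \<phi> s = (\<integral>\<^sup>+xy. ennreal (h (fst xy) (snd xy)) \<partial>(Mx \<Otimes>\<^sub>M Mx))"
    unfolding S_def density_factor h_def by (simp add: mult.assoc)
  also have "\<dots> = (\<integral>\<^sup>+x. \<integral>\<^sup>+y. ennreal (h x y) \<partial>Mx \<partial>Mx)"
    using sigma_finite_measure.nn_integral_fst[OF sfMx hm] by simp
  also have "\<dots> = (\<integral>\<^sup>+x. W \<phi> x * ennreal (O.K (x (Suc (Suc k))) s) \<partial>Mx)"
  proof (rule nn_integral_cong)
    fix x assume x: "x \<in> space Mx"
    have ins: "{1..Suc (Suc k)} = insert (Suc (Suc k)) {1..Suc k}" by auto
    have hx: "(\<lambda>y. ennreal (h x y)) \<in> borel_measurable Mx"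
      using measurable_Pair2[OF hm x] by simp
    have "(\<integral>\<^sup>+y. ennreal (h x y) \<partial>Mx) = (\<integral>\<^sup>+y'. \<integral>\<^sup>+b. ennreal (h x (y'(Suc (Suc k) := b))) \<partial>lborel \<partial>MJ)"
      using PS.product_nn_integral_insert[of "{1..Suc k}" "Suc (Suc k)" "\<lambda>y. ennreal (h x y)"] hx
      unfolding ins by simp
    also have "\<dots> = (\<integral>\<^sup>+y'. ennreal (\<phi> (x 1) * Rf k f g x y' * Ef k g (x (Suc (Suc k))) (y' (Suc k))) * ennreal (O.K (x (Suc (Suc k))) s) \<partial>MJ)"
    proof (rule nn_integral_cong)
      fix y' assume y': "y' \<in> space MJ"
      define c where "c = \<phi> (x 1) * Rf k f g x y' * Ef k g (x (Suc (Suc k))) (y' (Suc k))"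
      have c0: "0 \<le> c" unfolding c_def using phin Rf_nonneg Ef_nonneg by simp
      have "(\<integral>\<^sup>+b. ennreal (h x (y'(Suc (Suc k) := b))) \<partial>lborel) = (\<integral>\<^sup>+b. ennreal c * ennreal (Qf k f g (x (Suc (Suc k))) b s) \<partial>lborel)"
        unfolding h_def c_def using Rf_upd[of k "Suc (Suc k)" f g x y'] phin Rf_nonneg Ef_nonneg
        by (intro nn_integral_cong) (simp add: ennreal_mult'' Qf_q O.q_nonneg)
      also have "\<dots> = ennreal c * (\<integral>\<^sup>+b. ennreal (Qf k f g (x (Suc (Suc k))) b s) \<partial>lborel)"
        by (rule nn_integral_cmult) (intro enn_meas, use O.q_meas[of "x (Suc (Suc k))" s] in \<open>simp add: Qf_q\<close>)
      finally show "(\<integral>\<^sup>+b. ennreal (h x (y'(Suc (Suc k) := b))) \<partial>lborel) = ennreal c * ennreal (O.K (x (Suc (Suc k))) s)"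
        by (simp add: K_int_eq)
    qed
    also have "\<dots> = W \<phi> x * ennreal (O.K (x (Suc (Suc k))) s)"
      unfolding W_def
      by (rule nn_integral_multc) (use measurable_Pair2[OF enn_meas[OF meas_W[OF phim]] x] in simp)
    finally show "(\<integral>\<^sup>+y. ennreal (h x y) \<partial>Mx) = W \<phi> x * ennreal (O.K (x (Suc (Suc k))) s)" .
  qed
  finally show ?thesis .
qed

end

lemma mono_mass:
  fixes w :: "real \<Rightarrow> ennreal" and e :: real
  assumes wm: "w \<in> borel_measurable borel" and w0: "\<And>a. a \<notin> {0..1} \<Longrightarrow> w a = 0"
    and wmono: "\<And>a a'. 0 \<le> a \<Longrightarrow> a \<le> a' \<Longrightarrow> w a' \<le> w a" and e: "0 < e" "e \<le> 1"
  shows "ennreal e * (\<integral>\<^sup>+a. w a \<partial>lborel) \<le> (\<integral>\<^sup>+a. w a * indicator {0..e} a \<partial>lborel)"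
proof -
  define X where "X = (\<integral>\<^sup>+a. w a * indicator {0..e} a \<partial>lborel)"
  define Y where "Y = (\<integral>\<^sup>+a. w a * indicator {e<..1} a \<partial>lborel)"
  have "(\<integral>\<^sup>+a. w a \<partial>lborel) = (\<integral>\<^sup>+a. w a * indicator {0..e} a + w a * indicator {e<..1} a \<partial>lborel)"
    using e by (intro nn_integral_cong) (auto simp: indicator_def w0)
  also have "\<dots> = X + Y" unfolding X_def Y_def
    using wm by (intro nn_integral_add) auto
  finally have tot: "(\<integral>\<^sup>+a. w a \<partial>lborel) = X + Y" .
  have "Y \<le> (\<integral>\<^sup>+a. w e * indicator {e<..1} a \<partial>lborel)"
    unfolding Y_def using e by (intro nn_integral_mono) (auto simp: indicator_def intro: wmono)
  also have "\<dots> = w e * ennreal (1 - e)" using e by (subst nn_integral_cmult_indicator) auto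
  finally have Yb: "Y \<le> w e * ennreal (1 - e)" .
  have "(\<integral>\<^sup>+a. w e * indicator {0..e} a \<partial>lborel) \<le> X"
    unfolding X_def using e by (intro nn_integral_mono) (auto simp: indicator_def intro: wmono)
  moreover have "(\<integral>\<^sup>+a. w e * indicator {0..e} a \<partial>lborel) = w e * ennreal e" using e by (subst nn_integral_cmult_indicator) auto
  ultimately have Xb: "w e * ennreal e \<le> X" by simp
  have "ennreal e * Y \<le> ennreal e * (w e * ennreal (1 - e))" by (rule mult_left_mono[OF Yb]) simp
  also have "\<dots> = ennreal (1 - e) * (w e * ennreal e)" by (simp add: algebra_simps)
  also have "\<dots> \<le> ennreal (1 - e) * X" by (rule mult_left_mono[OF Xb]) simp
  finally have eY: "ennreal e * Y \<le> ennreal (1 - e) * X" .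
  have "ennreal e * (\<integral>\<^sup>+a. w a \<partial>lborel) = ennreal e * X + ennreal e * Y" unfolding tot by (simp add: algebra_simps)
  also have "\<dots> \<le> ennreal e * X + ennreal (1 - e) * X" using eY by (rule add_left_mono)
  also have "\<dots> = (ennreal e + ennreal (1 - e)) * X" by (simp add: algebra_simps)
  also have "ennreal e + ennreal (1 - e) = 1" using e by (subst ennreal_plus[symmetric]) auto
  finally show ?thesis by (simp add: X_def)
qed

context nice begin

abbreviation "one \<equiv> (\<lambda>_::real. 1::real)"

lemma Ef_anti: "0 \<le> a \<Longrightarrow> a \<le> a' \<Longrightarrow> Ef k g a' b \<le> Ef k g a b"
  unfolding Ef_def ind01_def using gn monoD[OF gm, of "b - a'" "b - a" "Suc k"]
  by (auto simp: indicator_def)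

lemma Ef_zero: "a \<notin> {0..1} \<Longrightarrow> Ef k g a b = 0"
  unfolding Ef_def ind01_def by simp

lemma T_mass:
  assumes e: "0 < e" "e \<le> 1"
  shows "ennreal e * (\<integral>\<^sup>+x. W one x \<partial>Mx) \<le> (\<integral>\<^sup>+x. W one x * indicator {0..e} (x (Suc (Suc k))) \<partial>Mx)"
proof -
  have ins: "{1..Suc (Suc k)} = insert (Suc (Suc k)) {1..Suc k}" by auto
  have Wm: "W one \<in> borel_measurable Mx" by (rule W_meas) simp
  have Wm2: "(\<lambda>x. W one x * indicator {0..e} (x (Suc (Suc k)))) \<in> borel_measurable Mx"
  proof -
    have "(\<lambda>x. x (Suc (Suc k))) \<in> borel_measurable Mx" by simp
    then have "(\<lambda>x. indicator {0..e} (x (Suc (Suc k))) :: ennreal) \<in> borel_measurable Mx" by measurable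
    then show ?thesis using Wm by (intro borel_measurable_times_ennreal)
  qed
  have "ennreal e * (\<integral>\<^sup>+x. W one x \<partial>Mx) = (\<integral>\<^sup>+x. ennreal e * W one x \<partial>Mx)"
    by (rule nn_integral_cmult[OF Wm, symmetric])
  also have "\<dots> = (\<integral>\<^sup>+x'. \<integral>\<^sup>+a. ennreal e * W one (x'(Suc (Suc k) := a)) \<partial>lborel \<partial>MJ)"
    using PS.product_nn_integral_insert[of "{1..Suc k}" "Suc (Suc k)" "\<lambda>x. ennreal e * W one x"] Wm
    unfolding ins by simp
  also have "\<dots> \<le> (\<integral>\<^sup>+x'. \<integral>\<^sup>+a. W one (x'(Suc (Suc k) := a)) * indicator {0..e} a \<partial>lborel \<partial>MJ)"
  proof (rule nn_integral_mono)
    fix x' assume x': "x' \<in> space MJ"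
    define w where "w a = W one (x'(Suc (Suc k) := a))" for a
    have wm: "w \<in> borel_measurable borel"
    proof -
      have "(\<lambda>v. x'(Suc (Suc k) := v)) \<in> measurable lborel Mx"
        using measurable_component_update[OF x', of "Suc (Suc k)"] unfolding ins[symmetric] by simp
      from measurable_compose[OF this Wm] show ?thesis unfolding w_def by simp
    qed
    have wW: "w a = (\<integral>\<^sup>+y. ennreal (Rf k f g x' y * Ef k g a (y (Suc k))) \<partial>MJ)" for a :: real
      unfolding w_def W_def using Rf_updx[of k "Suc (Suc k)" f g x' a] by simp
    have "ennreal e * (\<integral>\<^sup>+a. w a \<partial>lborel) \<le> (\<integral>\<^sup>+a. w a * indicator {0..e} a \<partial>lborel)"
    proof (rule mono_mass[OF wm _ _ e])
      fix a :: real assume "a \<notin> {0..1}" then show "w a = 0" unfolding wW by (simp add: Ef_zero)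
    next
      fix a a' :: real assume "0 \<le> a" "a \<le> a'"
      then show "w a' \<le> w a" unfolding wW
        by (intro nn_integral_mono ennreal_leI mult_left_mono Ef_anti Rf_nonneg)
    qed
    moreover have "ennreal e * (\<integral>\<^sup>+a. w a \<partial>lborel) = (\<integral>\<^sup>+a. ennreal e * w a \<partial>lborel)"
      using wm by (intro nn_integral_cmult[symmetric]) simp
    ultimately show "(\<integral>\<^sup>+a. ennreal e * W one (x'(Suc (Suc k) := a)) \<partial>lborel) \<le> (\<integral>\<^sup>+a. W one (x'(Suc (Suc k) := a)) * indicator {0..e} a \<partial>lborel)"
      unfolding w_def by simp
  qed
  also have "\<dots> = (\<integral>\<^sup>+x. W one x * indicator {0..e} (x (Suc (Suc k))) \<partial>Mx)"
    using PS.product_nn_integral_insert[of "{1..Suc k}" "Suc (Suc k)" "\<lambda>x. W one x * indicator {0..e} (x (Suc (Suc k)))"] Wm2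
    unfolding ins by simp
  finally show ?thesis .
qed

end

context nice begin

lemma D_low:
  assumes s: "0 \<le> s" "s \<le> 1/(4*A)"
  shows "ennreal (1/(16*A)) * (ennreal (1/(4*A)) * (\<integral>\<^sup>+x. W one x \<partial>Mx)) \<le> S one s"
proof -
  define e where "e = 1/(4*A)"
  have e: "0 < e" "e \<le> 1" using A1 by (auto simp: e_def field_simps)
  have Wm: "W one \<in> borel_measurable Mx" by (rule W_meas) simp
  have im: "(\<lambda>x. indicator {0..e} (x (Suc (Suc k))) :: ennreal) \<in> borel_measurable Mx"
  proof -
    have "(\<lambda>x. x (Suc (Suc k))) \<in> borel_measurable Mx" by simp
    then show ?thesis by measurable
  qed
  have "ennreal (1/(16*A)) * (ennreal e * (\<integral>\<^sup>+x. W one x \<partial>Mx)) \<le> ennreal (1/(16*A)) * (\<integral>\<^sup>+x. W one x * indicator {0..e} (x (Suc (Suc k))) \<partial>Mx)"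
    by (rule mult_left_mono[OF T_mass[OF e]]) simp
  also have "\<dots> = (\<integral>\<^sup>+x. ennreal (1/(16*A)) * (W one x * indicator {0..e} (x (Suc (Suc k)))) \<partial>Mx)"
    using Wm im by (intro nn_integral_cmult[symmetric] borel_measurable_times_ennreal)
  also have "\<dots> \<le> (\<integral>\<^sup>+x. W one x * ennreal (O.K (x (Suc (Suc k))) s) \<partial>Mx)"
  proof (rule nn_integral_mono)
    fix x :: "nat \<Rightarrow> real"
    show "ennreal (1/(16*A)) * (W one x * indicator {0..e} (x (Suc (Suc k)))) \<le> W one x * ennreal (O.K (x (Suc (Suc k))) s)"
    proof (cases "x (Suc (Suc k)) \<in> {0..e}")
      case True
      then have "1/(16*A) \<le> O.K (x (Suc (Suc k))) s" using s by (intro O.K_low) (auto simp: e_def)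
      then have "ennreal (1/(16*A)) \<le> ennreal (O.K (x (Suc (Suc k))) s)" by (rule ennreal_leI)
      then show ?thesis using True by (simp add: mult_left_mono mult.commute)
    qed simp
  qed
  also have "\<dots> = S one s" by (rule S_repr[symmetric]) auto
  finally show ?thesis by (simp add: e_def)
qed

lemma W_le: assumes "\<And>u. \<phi> u \<le> 1" shows "W \<phi> x \<le> W one x"
  unfolding W_def using Rf_nonneg Ef_nonneg assms
  by (intro nn_integral_mono ennreal_leI mult_right_mono) auto

lemma N_lip:
  assumes phim: "\<phi> \<in> borel_measurable borel" and phin: "\<And>u. 0 \<le> \<phi> u" and phi1: "\<And>u. \<phi> u \<le> 1"
    and s: "0 \<le> s1" "s1 \<le> 1" "0 \<le> s2" "s2 \<le> 1"
  shows "S \<phi> s1 \<le> S \<phi> s2 + ennreal (A * A * \<bar>s1 - s2\<bar>) * (\<integral>\<^sup>+x. W one x \<partial>Mx)"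
proof -
  have Wm: "W \<phi> \<in> borel_measurable Mx" by (rule W_meas[OF phim])
  have W1m: "W one \<in> borel_measurable Mx" by (rule W_meas) simp
  have "S \<phi> s1 = (\<integral>\<^sup>+x. W \<phi> x * ennreal (O.K (x (Suc (Suc k))) s1) \<partial>Mx)" by (rule S_repr[OF phim phin])
  also have "\<dots> \<le> (\<integral>\<^sup>+x. W \<phi> x * ennreal (O.K (x (Suc (Suc k))) s2) + ennreal (A * A * \<bar>s1 - s2\<bar>) * W one x \<partial>Mx)"
  proof (rule nn_integral_mono)
    fix x :: "nat \<Rightarrow> real"
    have "O.K (x (Suc (Suc k))) s1 \<le> O.K (x (Suc (Suc k))) s2 + A * A * \<bar>s1 - s2\<bar>"
      using O.K_lip[OF s, of "x (Suc (Suc k))"] by linarith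
    then have "ennreal (O.K (x (Suc (Suc k))) s1) \<le> ennreal (O.K (x (Suc (Suc k))) s2) + ennreal (A * A * \<bar>s1 - s2\<bar>)"
    proof -
      have "ennreal (O.K (x (Suc (Suc k))) s2) + ennreal (A * A * \<bar>s1 - s2\<bar>) = ennreal (O.K (x (Suc (Suc k))) s2 + A * A * \<bar>s1 - s2\<bar>)"
        using O.K_nonneg[of "x (Suc (Suc k))" s2] A1 by (intro ennreal_plus[symmetric]) auto
      with \<open>O.K (x (Suc (Suc k))) s1 \<le> _\<close> show ?thesis by (simp add: ennreal_leI)
    qed
    then have "W \<phi> x * ennreal (O.K (x (Suc (Suc k))) s1) \<le> W \<phi> x * (ennreal (O.K (x (Suc (Suc k))) s2) + ennreal (A * A * \<bar>s1 - s2\<bar>))"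
      by (rule mult_left_mono) simp
    also have "\<dots> = W \<phi> x * ennreal (O.K (x (Suc (Suc k))) s2) + ennreal (A * A * \<bar>s1 - s2\<bar>) * W \<phi> x"
      by (simp add: algebra_simps)
    also have "\<dots> \<le> W \<phi> x * ennreal (O.K (x (Suc (Suc k))) s2) + ennreal (A * A * \<bar>s1 - s2\<bar>) * W one x"
      using W_le[OF phi1, where x=x] by (intro add_left_mono mult_left_mono) auto
    finally show "W \<phi> x * ennreal (O.K (x (Suc (Suc k))) s1) \<le> \<dots>" .
  qed
  also have "\<dots> = (\<integral>\<^sup>+x. W \<phi> x * ennreal (O.K (x (Suc (Suc k))) s2) \<partial>Mx) + (\<integral>\<^sup>+x. ennreal (A * A * \<bar>s1 - s2\<bar>) * W one x \<partial>Mx)"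
    using Wm W1m K_meas by (intro nn_integral_add borel_measurable_times_ennreal) auto
  also have "\<dots> = S \<phi> s2 + ennreal (A * A * \<bar>s1 - s2\<bar>) * (\<integral>\<^sup>+x. W one x \<partial>Mx)"
    using W1m by (simp add: S_repr[OF phim phin] nn_integral_cmult)
  finally show ?thesis .
qed

end

lemma dens_nonneg:
  assumes "\<And>i u. 0 \<le> f i u" "\<And>i u. 0 \<le> g i u"
  shows "0 \<le> sawtooth_density n f g x y"
  unfolding sawtooth_density_def using assms
  by (intro mult_nonneg_nonneg prod_nonneg) (auto simp: indicator_def)

lemma dens_bound:
  assumes fn: "\<And>i u. 0 \<le> f i u" and gn: "\<And>i u. 0 \<le> g i u"
    and fb: "\<And>i u. f i u \<le> f i 1" and gb: "\<And>i u. g i u \<le> g i 1"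
  shows "sawtooth_density n f g x y \<le> (\<Prod>i\<in>{1..n}. f i 1 * g i 1) * ((\<Prod>i\<in>{1..n}. ind01 (x i)) * (\<Prod>i\<in>{1..n}. ind01 (y i)))"
proof -
  have P1: "(\<Prod>i\<in>{1..n+1}. indicator {0..1} (x i) :: real) \<le> (\<Prod>i\<in>{1..n}. ind01 (x i))"
  proof -
    have "(\<Prod>i\<in>{1..n+1}. indicator {0..1} (x i) :: real) = (\<Prod>i\<in>{1..n}. ind01 (x i)) * indicator {0..1} (x (n+1))"
      by (simp add: prod.cl_ivl_Suc ind01_def)
    also have "\<dots> \<le> (\<Prod>i\<in>{1..n}. ind01 (x i)) * 1"
      by (intro mult_left_mono prod_nonneg) (auto simp: ind01_def indicator_def)
    finally show ?thesis by simp
  qed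
  have P3: "(\<Prod>i\<in>{1..n}. indicator {..y i} (x i) * indicator {..y i} (x (i+1)) * f i (y i - x i) * g i (y i - x (i+1)))
      \<le> (\<Prod>i\<in>{1..n}. f i 1 * g i 1)"
  proof (rule prod_mono, rule conjI)
    fix i
    show "0 \<le> indicator {..y i} (x i) * indicator {..y i} (x (i+1)) * f i (y i - x i) * g i (y i - x (i+1))"
      using fn gn by (auto simp: indicator_def)
    have "indicator {..y i} (x i) * indicator {..y i} (x (i+1)) * f i (y i - x i) * g i (y i - x (i+1)) \<le> 1 * 1 * f i (y i - x i) * g i (y i - x (i+1))"
      using fn gn by (intro mult_right_mono) (auto simp: indicator_def)
    also have "\<dots> \<le> f i 1 * g i 1" using fn gn fb gb by (simp add: mult_mono)
    finally show "indicator {..y i} (x i) * indicator {..y i} (x (i+1)) * f i (y i - x i) * g i (y i - x (i+1)) \<le> f i 1 * g i 1" .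
  qed
  have nn: "0 \<le> (\<Prod>i\<in>{1..n}. ind01 (x i))" "0 \<le> (\<Prod>i\<in>{1..n}. ind01 (y i))"
    "0 \<le> (\<Prod>i\<in>{1..n+1}. indicator {0..1} (x i) :: real)"
    "0 \<le> (\<Prod>i\<in>{1..n}. indicator {..y i} (x i) * indicator {..y i} (x (i+1)) * f i (y i - x i) * g i (y i - x (i+1)))"
    using fn gn by (auto intro!: prod_nonneg simp: ind01_def indicator_def)
  have "sawtooth_density n f g x y \<le> (\<Prod>i\<in>{1..n}. ind01 (x i)) * (\<Prod>i\<in>{1..n}. ind01 (y i)) * (\<Prod>i\<in>{1..n}. f i 1 * g i 1)"
    unfolding sawtooth_density_def
    by (intro mult_mono P1 P3 order_refl mult_nonneg_nonneg nn) (auto simp: ind01_def intro!: prod_nonneg)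
  then show ?thesis by (simp add: algebra_simps)
qed

context nice begin

lemma dens_eq: "(\<lambda>xy. \<phi> (fst xy 1) * sawtooth_density (Suc (Suc k)) f g ((fst xy)(Suc (Suc k) + 1 := s)) (snd xy)) =
   (\<lambda>xy. \<phi> (fst xy 1) * Rf k f g (fst xy) (snd xy) * Ef k g (fst xy (Suc (Suc k))) (snd xy (Suc k)) *
      Qf k f g (fst xy (Suc (Suc k))) (snd xy (Suc (Suc k))) s)"
  by (rule ext) (simp only: density_factor mult.assoc)

lemma S_meas: "\<phi> \<in> borel_measurable borel \<Longrightarrow>
  (\<lambda>xy. \<phi> (fst xy 1) * sawtooth_density (Suc (Suc k)) f g ((fst xy)(Suc (Suc k) + 1 := s)) (snd xy)) \<in> borel_measurable (Mx \<Otimes>\<^sub>M Mx)"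
  unfolding dens_eq by (rule meas_full)

lemma slice_eq:
  assumes "\<phi> \<in> borel_measurable borel" "\<And>u. 0 \<le> \<phi> u"
  shows "sawtooth_slice_integral (Suc (Suc k)) f g \<phi> s = enn2real (S \<phi> s)"
  unfolding sawtooth_slice_integral_def S_def
  by (rule integral_eq_nn_integral[OF S_meas[OF assms(1)]]) (auto intro!: mult_nonneg_nonneg dens_nonneg fn gn assms(2))

abbreviation "P z \<equiv> (\<Prod>i\<in>{1..Suc (Suc k)}. ind01 (z i))"

lemma ind01_int: "(\<integral>\<^sup>+a. ennreal (ind01 a) \<partial>lborel) = 1"
  by (simp add: ind01_def ennreal_indicator)

lemma P_int: "(\<integral>\<^sup>+y. ennreal (P y) \<partial>Mx) = 1"
proof -
  have "(\<integral>\<^sup>+y. ennreal (P y) \<partial>Mx) = (\<integral>\<^sup>+y. (\<Prod>i\<in>{1..Suc (Suc k)}. ennreal (ind01 (y i))) \<partial>Mx)"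
    by (intro nn_integral_cong prod_ennreal[symmetric]) (auto simp: ind01_def)
  also have "\<dots> = (\<Prod>i\<in>{1..Suc (Suc k)}. (\<integral>\<^sup>+a. ennreal (ind01 a) \<partial>lborel))"
    by (rule PS.product_nn_integral_prod) (auto intro!: enn_meas simp: ind01_def)
  finally show ?thesis by (simp add: ind01_int)
qed

lemma phiP_int:
  assumes phim: "\<phi> \<in> borel_measurable borel" and phin: "\<And>u. 0 \<le> \<phi> u"
  shows "(\<integral>\<^sup>+x. ennreal (\<phi> (x 1) * P x) \<partial>Mx) = (\<integral>\<^sup>+a. ennreal (\<phi> a * ind01 a) \<partial>lborel)"
proof -
  define h where "h i u = (if i = 1 then \<phi> u * ind01 u else ind01 u)" for i :: nat and u :: real
  have hn: "0 \<le> h i u" for i u using phin by (auto simp: h_def ind01_def)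
  have ins: "{1..Suc (Suc k)} = insert 1 {2..Suc (Suc k)}" by auto
  have eq: "\<phi> (x 1) * P x = (\<Prod>i\<in>{1..Suc (Suc k)}. h i (x i))" for x :: "nat \<Rightarrow> real"
  proof -
    have A: "(\<Prod>i\<in>{1..Suc (Suc k)}. h i (x i)) = h 1 (x 1) * (\<Prod>i\<in>{2..Suc (Suc k)}. h i (x i))"
      unfolding ins by (rule prod.insert) auto
    have A2: "(\<Prod>i\<in>{2..Suc (Suc k)}. h i (x i)) = (\<Prod>i\<in>{2..Suc (Suc k)}. ind01 (x i))"
      by (intro prod.cong) (auto simp: h_def)
    have B: "P x = ind01 (x 1) * (\<Prod>i\<in>{2..Suc (Suc k)}. ind01 (x i))"
      unfolding ins by (rule prod.insert) auto
    have h1: "h 1 (x 1) = \<phi> (x 1) * ind01 (x 1)" by (simp add: h_def)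
    show ?thesis by (simp only: A A2 B h1 mult.assoc)
  qed
  have "(\<integral>\<^sup>+x. ennreal (\<phi> (x 1) * P x) \<partial>Mx) = (\<integral>\<^sup>+x. (\<Prod>i\<in>{1..Suc (Suc k)}. ennreal (h i (x i))) \<partial>Mx)"
    unfolding eq by (intro nn_integral_cong prod_ennreal[symmetric] hn)
  also have "\<dots> = (\<Prod>i\<in>{1..Suc (Suc k)}. (\<integral>\<^sup>+a. ennreal (h i a) \<partial>lborel))"
    using phim by (intro PS.product_nn_integral_prod) (auto intro!: enn_meas simp: h_def ind01_def)
  also have "\<dots> = (\<integral>\<^sup>+a. ennreal (h 1 a) \<partial>lborel) * (\<Prod>i\<in>{2..Suc (Suc k)}. (\<integral>\<^sup>+a. ennreal (h i a) \<partial>lborel))"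
    unfolding ins by (subst prod.insert) auto
  also have "(\<Prod>i\<in>{2..Suc (Suc k)}. (\<integral>\<^sup>+a. ennreal (h i a) \<partial>lborel)) = 1"
    by (intro prod.neutral ballI) (auto simp: h_def ind01_int)
  finally show ?thesis by (simp add: h_def)
qed

definition "C = (\<Prod>i\<in>{1..Suc (Suc k)}. f i 1 * g i 1)"

lemma C_nonneg: "0 \<le> C" unfolding C_def using fn gn by (intro prod_nonneg) auto

lemma S_box:
  assumes phim: "\<phi> \<in> borel_measurable borel" and phin: "\<And>u. 0 \<le> \<phi> u"
  shows "S \<phi> s \<le> ennreal C * (\<integral>\<^sup>+a. ennreal (\<phi> a * ind01 a) \<partial>lborel)"
proof -
  have Pn: "0 \<le> P z" for z by (intro prod_nonneg) (auto simp: ind01_def)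
  have Pm: "(\<lambda>z. P z) \<in> borel_measurable Mx"
    by (intro borel_measurable_prod measurable_compose[OF measurable_component_singleton]) (auto simp: ind01_def)
  have phi1m: "(\<lambda>x. \<phi> (x 1)) \<in> borel_measurable Mx"
    by (intro measurable_compose[OF measurable_component_singleton[of 1 "{1..Suc (Suc k)}" "\<lambda>_. lborel"] phim[simplified measurable_lborel2[symmetric]]]) auto
  have "S \<phi> s \<le> (\<integral>\<^sup>+xy. ennreal (C * (\<phi> (fst xy 1) * P (fst xy))) * ennreal (P (snd xy)) \<partial>(Mx \<Otimes>\<^sub>M Mx))"
    unfolding S_def
  proof (rule nn_integral_mono)
    fix xy :: "(nat \<Rightarrow> real) \<times> (nat \<Rightarrow> real)"
    have "sawtooth_density (Suc (Suc k)) f g ((fst xy)(Suc (Suc k) + 1 := s)) (snd xy) \<le> C * (P ((fst xy)(Suc (Suc k) + 1 := s)) * P (snd xy))"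
      unfolding C_def by (rule dens_bound[where f=f and g=g, OF fn gn fb gb])
    also have "P ((fst xy)(Suc (Suc k) + 1 := s)) = P (fst xy)" by (intro prod.cong) auto
    finally have "\<phi> (fst xy 1) * sawtooth_density (Suc (Suc k)) f g ((fst xy)(Suc (Suc k) + 1 := s)) (snd xy) \<le> \<phi> (fst xy 1) * (C * (P (fst xy) * P (snd xy)))"
      by (rule mult_left_mono) (rule phin)
    then show "ennreal (\<phi> (fst xy 1) * sawtooth_density (Suc (Suc k)) f g ((fst xy)(Suc (Suc k) + 1 := s)) (snd xy)) \<le> ennreal (C * (\<phi> (fst xy 1) * P (fst xy))) * ennreal (P (snd xy))"
      using Pn by (subst ennreal_mult''[symmetric]) (auto intro!: ennreal_leI simp: algebra_simps)
  qed
  also have "\<dots> = (\<integral>\<^sup>+x. \<integral>\<^sup>+y. ennreal (C * (\<phi> (x 1) * P x)) * ennreal (P y) \<partial>Mx \<partial>Mx)"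
  proof -
    have "(\<lambda>xy. ennreal (C * (\<phi> (fst xy 1) * P (fst xy))) * ennreal (P (snd xy))) \<in> borel_measurable (Mx \<Otimes>\<^sub>M Mx)"
      using Pm phi1m by (intro borel_measurable_times_ennreal enn_meas borel_measurable_times borel_measurable_const
          measurable_compose[OF measurable_fst] measurable_compose[OF measurable_snd])
    from sigma_finite_measure.nn_integral_fst[OF sfMx this] show ?thesis by simp
  qed
  also have "\<dots> = (\<integral>\<^sup>+x. ennreal (C * (\<phi> (x 1) * P x)) \<partial>Mx)"
    by (intro nn_integral_cong) (simp only: nn_integral_cmult[OF enn_meas[OF Pm]] P_int mult_1_right)
  also have "\<dots> = ennreal C * (\<integral>\<^sup>+x. ennreal (\<phi> (x 1) * P x) \<partial>Mx)"
  proof -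
    have m: "(\<lambda>x. ennreal (\<phi> (x 1) * P x)) \<in> borel_measurable Mx"
      using Pm phi1m by (intro enn_meas borel_measurable_times)
    have "(\<integral>\<^sup>+x. ennreal (C * (\<phi> (x 1) * P x)) \<partial>Mx) = (\<integral>\<^sup>+x. ennreal C * ennreal (\<phi> (x 1) * P x) \<partial>Mx)"
      by (intro nn_integral_cong ennreal_mult mult_nonneg_nonneg phin Pn C_nonneg)
    also have "\<dots> = ennreal C * (\<integral>\<^sup>+x. ennreal (\<phi> (x 1) * P x) \<partial>Mx)"
      by (rule nn_integral_cmult[OF m])
    finally show ?thesis .
  qed
  finally show ?thesis using phiP_int[OF phim phin] by simp
qed

end

lemma ratio_lip:
  fixes n1 n2 d1 d2 t e \<kappa> L :: real
  assumes "n1 \<le> n2 + e" "n2 \<le> n1 + e" "d1 \<le> d2 + e" "d2 \<le> d1 + e"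
    "0 \<le> n1" "n1 \<le> d1" "0 \<le> n2" "n2 \<le> d2" "\<kappa> * t \<le> d1" "\<kappa> * t \<le> d2"
    "0 < \<kappa>" "0 \<le> t" "e = L * t" "0 \<le> L"
  shows "\<bar>n1/d1 - n2/d2\<bar> \<le> 2 * L / \<kappa>"
proof (cases "t = 0")
  case True
  then have "n1 = n2" "d1 = d2" using assms by auto
  then show ?thesis using assms by simp
next
  case False
  then have t: "0 < t" using assms by simp
  have kt: "0 < \<kappa> * t" using assms(11) t by (rule mult_pos_pos)
  have d1: "0 < d1" "0 < d2" using kt assms(9,10) by linarith+
  have e: "0 \<le> e" using assms t by simp
  have "\<bar>n1 * d2 - n2 * d1\<bar> = \<bar>(n1 - n2) * d2 + n2 * (d2 - d1)\<bar>" by (simp add: algebra_simps)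
  also have "\<dots> \<le> \<bar>(n1 - n2) * d2\<bar> + \<bar>n2 * (d2 - d1)\<bar>" by (rule abs_triangle_ineq)
  also have "\<dots> = \<bar>n1 - n2\<bar> * d2 + n2 * \<bar>d2 - d1\<bar>"
    using d1 assms(7) by (simp add: abs_mult)
  also have "\<dots> \<le> e * d2 + d2 * e"
  proof (rule add_mono)
    have "\<bar>n1 - n2\<bar> \<le> e" using assms(1,2) by linarith
    then show "\<bar>n1 - n2\<bar> * d2 \<le> e * d2" using d1 by (simp add: mult_right_mono)
    have "\<bar>d2 - d1\<bar> \<le> e" using assms(3,4) by linarith
    then show "n2 * \<bar>d2 - d1\<bar> \<le> d2 * e" using assms(7,8) by (intro mult_mono) auto
  qed
  finally have num: "\<bar>n1 * d2 - n2 * d1\<bar> \<le> 2 * e * d2" by (simp add: algebra_simps)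
  have "\<bar>n1/d1 - n2/d2\<bar> = \<bar>n1 * d2 - n2 * d1\<bar> / (d1 * d2)"
    using d1 by (simp add: field_simps abs_div)
  also have "\<dots> \<le> 2 * e * d2 / (d1 * d2)"
    using d1 num by (intro divide_right_mono) auto
  also have "\<dots> = 2 * e / d1" using d1 by simp
  also have "\<dots> \<le> 2 * e / (\<kappa> * t)"
    using assms(9) e kt by (intro divide_left_mono) auto
  also have "\<dots> = 2 * L / \<kappa>" using assms t by (simp add: field_simps)
  finally show ?thesis .
qed

lemma conv1:
  fixes X Y Z :: ennreal
  assumes "X \<le> Y + ennreal c * Z" "Y < top" "Z < top" "0 \<le> c"
  shows "enn2real X \<le> enn2real Y + c * enn2real Z"
proof -
  have fin: "ennreal c * Z < top" using assms by (simp add: ennreal_mult_less_top)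
  have "enn2real X \<le> enn2real (Y + ennreal c * Z)"
    using assms fin by (intro enn2real_mono) auto
  also have "\<dots> = enn2real Y + enn2real (ennreal c * Z)" using assms fin by (intro enn2real_plus) auto
  also have "enn2real (ennreal c * Z) = c * enn2real Z" using assms by (simp add: enn2real_mult)
  finally show ?thesis .
qed

lemma conv2:
  fixes Z D :: ennreal
  assumes "ennreal a * (ennreal b * Z) \<le> D" "D < top" "0 \<le> a" "0 \<le> b"
  shows "a * b * enn2real Z \<le> enn2real D"
proof -
  have "enn2real (ennreal a * (ennreal b * Z)) \<le> enn2real D" using assms by (intro enn2real_mono) auto
  then show ?thesis using assms by (simp add: enn2real_mult mult.assoc)
qed

context nice begin

lemma S_fin:
  assumes phim: "\<phi> \<in> borel_measurable borel" and phin: "\<And>u. 0 \<le> \<phi> u" and phi1: "\<And>u. \<phi> u \<le> 1"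
  shows "S \<phi> s < top"
proof -
  have "(\<integral>\<^sup>+a. ennreal (\<phi> a * ind01 a) \<partial>lborel) \<le> (\<integral>\<^sup>+a. ennreal (ind01 a) \<partial>lborel)"
    using phi1 by (intro nn_integral_mono ennreal_leI) (auto simp: ind01_def indicator_def)
  then have "ennreal C * (\<integral>\<^sup>+a. ennreal (\<phi> a * ind01 a) \<partial>lborel) \<le> ennreal C * 1"
    unfolding ind01_int by (rule mult_left_mono) simp
  then have "S \<phi> s \<le> ennreal C" using S_box[OF phim phin, of s] by simp
  then show ?thesis using le_less_trans by fastforce
qed

lemma T_fin: "(\<integral>\<^sup>+x. W one x \<partial>Mx) < top"
proof -
  have "ennreal (1/(16*A)) * (ennreal (1/(4*A)) * (\<integral>\<^sup>+x. W one x \<partial>Mx)) < top"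
    using D_low[of 0] S_fin[of one 0] A1 by (auto intro: le_less_trans)
  then show ?thesis using A1 by (auto simp: ennreal_mult_less_top ennreal_mult_eq_top_iff top.not_eq_extremum)
qed

lemma S_mono_phi:
  assumes "\<And>u. \<phi> u \<le> 1" shows "S \<phi> s \<le> S one s"
  unfolding S_def using assms dens_nonneg[OF fn gn]
  by (intro nn_integral_mono ennreal_leI mult_right_mono) auto

lemma S_add:
  assumes "t1 \<le> t2"
  shows "S (indicator {..t2}) s = S (indicator {..t1}) s + S (indicator {t1<..t2}) s"
proof -
  have "S (indicator {..t2}) s = (\<integral>\<^sup>+xy. ennreal (indicator {..t1} (fst xy 1) * sawtooth_density (Suc (Suc k)) f g ((fst xy)(Suc (Suc k) + 1 := s)) (snd xy))
     + ennreal (indicator {t1<..t2} (fst xy 1) * sawtooth_density (Suc (Suc k)) f g ((fst xy)(Suc (Suc k) + 1 := s)) (snd xy)) \<partial>(Mx \<Otimes>\<^sub>M Mx))"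
    unfolding S_def using assms dens_nonneg[OF fn gn]
    by (intro nn_integral_cong) (auto simp: indicator_def ennreal_plus[symmetric] simp del: ennreal_plus)
  also have "\<dots> = S (indicator {..t1}) s + S (indicator {t1<..t2}) s"
    unfolding S_def by (intro nn_integral_add enn_meas S_meas) auto
  finally show ?thesis .
qed

lemma u_lip:
  assumes "t1 \<le> t2"
  shows "\<bar>enn2real (S (indicator {..t2}) s) - enn2real (S (indicator {..t1}) s)\<bar> \<le> C * (t2 - t1)"
proof -
  have f1: "S (indicator {..t1}) s < top" "S (indicator {t1<..t2}) s < top"
    by (intro S_fin; auto simp: indicator_def)+
  have "S (indicator {t1<..t2}) s \<le> ennreal C * (\<integral>\<^sup>+a. ennreal (indicator {t1<..t2} a * ind01 a) \<partial>lborel)"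
    by (intro S_box) auto
  also have "(\<integral>\<^sup>+a. ennreal (indicator {t1<..t2} a * ind01 a) \<partial>lborel) \<le> (\<integral>\<^sup>+a. indicator {t1<..t2} a \<partial>lborel)"
    by (intro nn_integral_mono) (auto simp: indicator_def ind01_def)
  also have "\<dots> = ennreal (t2 - t1)" using assms by simp
  finally have "S (indicator {t1<..t2}) s \<le> ennreal C * ennreal (t2 - t1)" by (simp add: mult_left_mono)
  then have b: "enn2real (S (indicator {t1<..t2}) s) \<le> C * (t2 - t1)"
    using assms C_nonneg by (subst (asm) ennreal_mult[symmetric]) (auto simp: enn2real_leI)
  have "enn2real (S (indicator {..t2}) s) = enn2real (S (indicator {..t1}) s) + enn2real (S (indicator {t1<..t2}) s)"
    unfolding S_add[OF assms] using f1 by (intro enn2real_plus) auto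
  then show ?thesis using b by simp
qed

end

context nice begin

lemma ind_meas: "(indicator {..t} :: real \<Rightarrow> real) \<in> borel_measurable borel" by simp

lemma cond_eq: "cond_cdf_XI_given_XF (Suc (Suc k)) f g s t = enn2real (S (indicator {..t}) s) / enn2real (S one s)"
  unfolding cond_cdf_XI_given_XF_def
  by (subst slice_eq, simp, simp, subst slice_eq, simp, simp, rule refl)

theorem nice_main:
  "(\<forall>s\<in>{0..1/(4*A)}. continuous_on {0..1} (cond_cdf_XI_given_XF (Suc (Suc k)) f g s)) \<and>
   (\<forall>s1\<in>{0..1/(4*A)}. \<forall>s2\<in>{0..1/(4*A)}. \<forall>t\<in>{0..1}.
      \<bar>cond_cdf_XI_given_XF (Suc (Suc k)) f g s1 t - cond_cdf_XI_given_XF (Suc (Suc k)) f g s2 t\<bar>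
        \<le> (2 * (A * A) / (1/(16*A) * (1/(4*A)))) * \<bar>s1 - s2\<bar>)"
proof (intro conjI ballI)
  fix s :: real
  define u where "u t = enn2real (S (indicator {..t}) s)" for t
  have "C-lipschitz_on {0..1} u"
  proof (rule lipschitz_onI)
    fix x y :: real
    show "dist (u x) (u y) \<le> C * dist x y"
    proof (cases "x \<le> y")
      case True then show ?thesis using u_lip[OF True, of s] by (simp add: u_def dist_real_def abs_minus_commute)
    next
      case False then show ?thesis using u_lip[of y x s] by (simp add: u_def dist_real_def)
    qed
  qed (rule C_nonneg)
  then have "continuous_on {0..1} u" by (rule lipschitz_on_continuous_on)
  then have "continuous_on {0..1} (\<lambda>t. u t * inverse (enn2real (S one s)))"
    by (rule continuous_on_mult_right)
  then show "continuous_on {0..1} (cond_cdf_XI_given_XF (Suc (Suc k)) f g s)"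
    unfolding cond_eq u_def by (simp add: divide_inverse)
next
  fix s1 s2 t :: real assume s1: "s1 \<in> {0..1/(4*A)}" and s2: "s2 \<in> {0..1/(4*A)}"
  have A4: "1/(4*A) \<le> 1" using A1 by (simp add: field_simps)
  have s: "0 \<le> s1" "s1 \<le> 1" "0 \<le> s2" "s2 \<le> 1" using s1 s2 A4 by auto
  define T where "T = (\<integral>\<^sup>+x. W one x \<partial>Mx)"
  have Tf: "T < top" unfolding T_def by (rule T_fin)
  have iphi1: "(indicator {..t} :: real \<Rightarrow> real) \<in> borel_measurable borel" by (rule ind_meas)
  have iphi2: "\<And>u. 0 \<le> (indicator {..t} u :: real)" "\<And>u. (indicator {..t} u :: real) \<le> 1"
    by (auto simp: indicator_def)
  note iphi = iphi1 iphi2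
  have ophi: "one \<in> borel_measurable borel" "\<And>u::real. 0 \<le> one u" "\<And>u::real. one u \<le> 1" by auto
  define L where "L = A * A * \<bar>s1 - s2\<bar>"
  have L0: "0 \<le> L" unfolding L_def by simp
  define \<kappa> where "\<kappa> = 1/(16*A) * (1/(4*A))"
  have k0: "0 < \<kappa>" unfolding \<kappa>_def using A1 by simp
  have n12: "enn2real (S (indicator {..t}) s1) \<le> enn2real (S (indicator {..t}) s2) + L * enn2real T"
    unfolding L_def T_def by (rule conv1[OF N_lip[OF iphi s] S_fin[OF iphi] T_fin]) simp
  have n21: "enn2real (S (indicator {..t}) s2) \<le> enn2real (S (indicator {..t}) s1) + L * enn2real T"
    using conv1[OF N_lip[OF iphi s(3,4,1,2)] S_fin[OF iphi] T_fin] unfolding L_def T_def by (simp add: abs_minus_commute)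
  have d12: "enn2real (S one s1) \<le> enn2real (S one s2) + L * enn2real T"
    unfolding L_def T_def by (rule conv1[OF N_lip[OF ophi s] S_fin[OF ophi] T_fin]) simp
  have d21: "enn2real (S one s2) \<le> enn2real (S one s1) + L * enn2real T"
    using conv1[OF N_lip[OF ophi s(3,4,1,2)] S_fin[OF ophi] T_fin] unfolding L_def T_def by (simp add: abs_minus_commute)
  have nd1: "enn2real (S (indicator {..t}) s1) \<le> enn2real (S one s1)"
    by (intro enn2real_mono S_mono_phi S_fin) (auto simp: indicator_def)
  have nd2: "enn2real (S (indicator {..t}) s2) \<le> enn2real (S one s2)"
    by (intro enn2real_mono S_mono_phi S_fin) (auto simp: indicator_def)
  have low1: "\<kappa> * enn2real T \<le> enn2real (S one s1)"
    unfolding \<kappa>_def T_def using s1 A1 by (intro conv2[OF D_low S_fin[OF ophi]]) auto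
  have low2: "\<kappa> * enn2real T \<le> enn2real (S one s2)"
    unfolding \<kappa>_def T_def using s2 A1 by (intro conv2[OF D_low S_fin[OF ophi]]) auto
  have "\<bar>enn2real (S (indicator {..t}) s1) / enn2real (S one s1) - enn2real (S (indicator {..t}) s2) / enn2real (S one s2)\<bar> \<le> 2 * L / \<kappa>"
    by (rule ratio_lip[OF n12 n21 d12 d21 _ nd1 _ nd2 low1 low2 k0 _ refl L0]) auto
  also have "2 * L / \<kappa> = (2 * (A * A) / (1/(16*A) * (1/(4*A)))) * \<bar>s1 - s2\<bar>"
    unfolding L_def \<kappa>_def by simp
  finally show "\<bar>cond_cdf_XI_given_XF (Suc (Suc k)) f g s1 t - cond_cdf_XI_given_XF (Suc (Suc k)) f g s2 t\<bar>
        \<le> (2 * (A * A) / (1/(16*A) * (1/(4*A)))) * \<bar>s1 - s2\<bar>"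
    unfolding cond_eq .
qed

end

lemma dens_cong:
  assumes "\<And>i u. i \<in> {1..n} \<Longrightarrow> u \<in> {0..1} \<Longrightarrow> f i u = f' i u \<and> g i u = g' i u"
  shows "sawtooth_density n f g x y = sawtooth_density n f' g' x y"
proof (cases "(\<forall>i\<in>{1..n+1}. x i \<in> {0..1}) \<and> (\<forall>i\<in>{1..n}. y i \<in> {0..1})")
  case True
  have "(\<Prod>i\<in>{1..n}. indicator {..y i} (x i) * indicator {..y i} (x (i+1)) * f i (y i - x i) * g i (y i - x (i+1))) =
        (\<Prod>i\<in>{1..n}. indicator {..y i} (x i) * indicator {..y i} (x (i+1)) * f' i (y i - x i) * g' i (y i - x (i+1)))"
  proof (rule prod.cong[OF refl])
    fix i assume i: "i \<in> {1..n}"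
    have xi: "x i \<in> {0..1}" "x (i+1) \<in> {0..1}" "y i \<in> {0..1}" using True i by auto
    show "indicator {..y i} (x i) * indicator {..y i} (x (i+1)) * f i (y i - x i) * g i (y i - x (i+1)) =
        indicator {..y i} (x i) * indicator {..y i} (x (i+1)) * f' i (y i - x i) * g' i (y i - x (i+1))"
    proof (cases "x i \<le> y i \<and> x (i+1) \<le> y i")
      case True
      then have "y i - x i \<in> {0..1}" "y i - x (i+1) \<in> {0..1}" using xi by auto
      then show ?thesis using assms[OF i] by simp
    qed (auto simp: indicator_def)
  qed
  then show ?thesis unfolding sawtooth_density_def by simp
next
  case False
  then consider (a) i where "i \<in> {1..n+1}" "x i \<notin> {0..1}" | (b) i where "i \<in> {1..n}" "y i \<notin> {0..1}" by blast
  then have "(\<Prod>i\<in>{1..n+1}. indicator {0..1} (x i) :: real) = 0 \<or> (\<Prod>i\<in>{1..n}. indicator {0..1} (y i) :: real) = 0"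
  proof cases
    case a then show ?thesis by (intro disjI1 prod_zero) (auto intro!: bexI[of _ i])
  next
    case b then show ?thesis by (intro disjI2 prod_zero) (auto intro!: bexI[of _ i])
  qed
  then show ?thesis unfolding sawtooth_density_def by auto
qed

lemma C1_cont: "C1_on_unit h \<Longrightarrow> continuous_on {0..1} h"
  unfolding C1_on_unit_def continuous_on_eq_continuous_within by (auto intro: DERIV_continuous)

definition clmp :: "real \<Rightarrow> real" where "clmp u = max 0 (min 1 u)"

lemma clmp_cont: "continuous_on UNIV clmp" unfolding clmp_def by (intro continuous_intros)
lemma clmp_in: "clmp u \<in> {0..1}" unfolding clmp_def by auto
lemma clmp_id: "u \<in> {0..1} \<Longrightarrow> clmp u = u" unfolding clmp_def by auto
lemma clmp_mono: "u \<le> v \<Longrightarrow> clmp u \<le> clmp v" unfolding clmp_def by auto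

definition ext_fun :: "nat \<Rightarrow> (nat \<Rightarrow> real \<Rightarrow> real) \<Rightarrow> nat \<Rightarrow> real \<Rightarrow> real" where
  "ext_fun n f i u = (if i \<in> {1..n} then f i (clmp u) else 0)"

lemma ext_props:
  assumes "sawtooth_weight_fun h"
  shows "continuous_on UNIV (\<lambda>u. h (clmp u))" "0 \<le> h (clmp u)" "mono (\<lambda>u. h (clmp u))"
    "h (clmp u) \<le> h (clmp 1)"
proof -
  have c: "continuous_on {0..1} h" and n: "\<forall>x\<in>{0..1}. 0 \<le> h x" and m: "mono_on {0..1} h"
    using assms C1_cont unfolding sawtooth_weight_fun_def by auto
  show "continuous_on UNIV (\<lambda>u. h (clmp u))"
    by (rule continuous_on_compose2[OF c clmp_cont]) (auto simp: clmp_def)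
  show "0 \<le> h (clmp u)" using n clmp_in by auto
  show "mono (\<lambda>u. h (clmp u))"
    by (rule monoI) (rule mono_onD[OF m clmp_in clmp_in clmp_mono])
  show "h (clmp u) \<le> h (clmp 1)"
    by (rule mono_onD[OF m clmp_in clmp_in]) (simp add: clmp_def)
qed

lemma ext_fun_eq: "ext_fun n f i = (if i \<in> {1..n} then (\<lambda>u. f i (clmp u)) else (\<lambda>u. 0))"
  by (auto simp: ext_fun_def)

lemma ext_fun_props:
  assumes "\<And>i. i \<in> {1..n} \<Longrightarrow> sawtooth_weight_fun (f i)"
  shows "continuous_on UNIV (ext_fun n f i) \<and> 0 \<le> ext_fun n f i u \<and> mono (ext_fun n f i) \<and>
    ext_fun n f i u \<le> ext_fun n f i 1"
proof (cases "i \<in> {1..n}")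
  case True
  then show ?thesis unfolding ext_fun_eq using ext_props[OF assms[OF True]] by simp
next
  case False
  then show ?thesis unfolding ext_fun_eq by (auto intro: monoI)
qed

lemma ext_fun_int: "n \<in> {1..n} \<Longrightarrow> integral {0..1} (ext_fun n f n) = integral {0..1} (f n)"
  by (rule Henstock_Kurzweil_Integration.integral_cong) (auto simp: ext_fun_def clmp_id)

theorem mainTheorem12:
  fixes A :: real
  assumes "A > 0"
  shows "\<exists>R B. R \<ge> 1 \<and>
    (\<forall>n::nat. \<forall>f g :: nat \<Rightarrow> real \<Rightarrow> real.
      n \<ge> 2 \<and>
      (\<forall>i\<in>{1..n}. sawtooth_weight_fun (f i) \<and> sawtooth_weight_fun (g i)) \<and>
      (\<forall>h\<in>{f 1, g 1, f n, g n}. integral {0..1} h = 1 \<and> (\<forall>x\<in>{0..1}. \<bar>h x\<bar> \<le> A))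
      \<longrightarrow>
      (\<forall>s\<in>{0..1/R}. continuous_on {0..1} (cond_cdf_XI_given_XF n f g s)) \<and>
      (\<forall>s1\<in>{0..1/R}. \<forall>s2\<in>{0..1/R}. \<forall>t\<in>{0..1}.
         \<bar>cond_cdf_XI_given_XF n f g s1 t - cond_cdf_XI_given_XF n f g s2 t\<bar> \<le> B * \<bar>s1 - s2\<bar>))"
proof -
  define Am where "Am = max A 1"
  have Am1: "1 \<le> Am" unfolding Am_def by simp
  show ?thesis
  proof (rule exI[of _ "4 * Am"], rule exI[of _ "2 * (Am * Am) / (1/(16*Am) * (1/(4*Am)))"], rule conjI)
    show "1 \<le> 4 * Am" using Am1 by simp
  next
    show "\<forall>n::nat. \<forall>f g :: nat \<Rightarrow> real \<Rightarrow> real.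
      n \<ge> 2 \<and>
      (\<forall>i\<in>{1..n}. sawtooth_weight_fun (f i) \<and> sawtooth_weight_fun (g i)) \<and>
      (\<forall>h\<in>{f 1, g 1, f n, g n}. integral {0..1} h = 1 \<and> (\<forall>x\<in>{0..1}. \<bar>h x\<bar> \<le> A))
      \<longrightarrow>
      (\<forall>s\<in>{0..1/(4 * Am)}. continuous_on {0..1} (cond_cdf_XI_given_XF n f g s)) \<and>
      (\<forall>s1\<in>{0..1/(4 * Am)}. \<forall>s2\<in>{0..1/(4 * Am)}. \<forall>t\<in>{0..1}.
         \<bar>cond_cdf_XI_given_XF n f g s1 t - cond_cdf_XI_given_XF n f g s2 t\<bar> \<le> (2 * (Am * Am) / (1/(16*Am) * (1/(4*Am)))) * \<bar>s1 - s2\<bar>)"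
    proof (intro allI impI)
    fix n :: nat and f g :: "nat \<Rightarrow> real \<Rightarrow> real"
    assume H: "n \<ge> 2 \<and>
      (\<forall>i\<in>{1..n}. sawtooth_weight_fun (f i) \<and> sawtooth_weight_fun (g i)) \<and>
      (\<forall>h\<in>{f 1, g 1, f n, g n}. integral {0..1} h = 1 \<and> (\<forall>x\<in>{0..1}. \<bar>h x\<bar> \<le> A))"
    obtain k where nk: "n = Suc (Suc k)" using H by (metis add_2_eq_Suc le_Suc_ex)
    define f' where "f' = ext_fun n f"
    define g' where "g' = ext_fun n g"
    have wf: "sawtooth_weight_fun (f i)" "sawtooth_weight_fun (g i)" if "i \<in> {1..n}" for i
      using H that by auto
    have Hf: "integral {0..1} (f n) = 1 \<and> (\<forall>x\<in>{0..1}. \<bar>f n x\<bar> \<le> A)"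
      and Hg: "integral {0..1} (g n) = 1 \<and> (\<forall>x\<in>{0..1}. \<bar>g n x\<bar> \<le> A)" using H by auto
    have hn: "integral {0..1} (f n) = 1" "integral {0..1} (g n) = 1"
      "\<And>x. x \<in> {0..1} \<Longrightarrow> f n x \<le> Am" "\<And>x. x \<in> {0..1} \<Longrightarrow> g n x \<le> Am"
    proof -
      show "integral {0..1} (f n) = 1" "integral {0..1} (g n) = 1" using Hf Hg by auto
      fix x :: real assume x: "x \<in> {0..1}"
      have "\<bar>f n x\<bar> \<le> A" "\<bar>g n x\<bar> \<le> A" using Hf Hg x by auto
      then show "f n x \<le> Am" "g n x \<le> Am" unfolding Am_def by (auto simp: le_max_iff_disj dest: abs_le_D1)
    qed
    have nin: "n \<in> {1..n}" using H by simp
    have nice: "nice k f' g' Am"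
    proof
      fix i u
      have wf1: "\<And>i. i \<in> {1..n} \<Longrightarrow> sawtooth_weight_fun (f i)" and wf2: "\<And>i. i \<in> {1..n} \<Longrightarrow> sawtooth_weight_fun (g i)"
        using wf by auto
      show "continuous_on UNIV (f' i)" "continuous_on UNIV (g' i)" "0 \<le> f' i u" "0 \<le> g' i u"
        "mono (f' i)" "mono (g' i)" "f' i u \<le> f' i 1" "g' i u \<le> g' i 1"
        unfolding f'_def g'_def using ext_fun_props[OF wf1, where i=i and u=u] ext_fun_props[OF wf2, where i=i and u=u] by auto
      have "f' n u = f n (clmp u)" "g' n u = g n (clmp u)" using nin by (auto simp: f'_def g'_def ext_fun_def)
      then show "f' (Suc (Suc k)) u \<le> Am" "g' (Suc (Suc k)) u \<le> Am"
        unfolding nk[symmetric] using hn(3,4) clmp_in by auto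
      show "integral {0..1} (f' (Suc (Suc k))) = 1" "integral {0..1} (g' (Suc (Suc k))) = 1"
        unfolding f'_def g'_def nk[symmetric] using ext_fun_int[OF nin] hn(1,2) by auto
      show "1 \<le> Am" by (rule Am1)
    qed
    have deq: "sawtooth_density n f g x y = sawtooth_density n f' g' x y" for x y
      by (rule dens_cong) (auto simp: f'_def g'_def ext_fun_def clmp_id)
    have ceq: "cond_cdf_XI_given_XF n f g = cond_cdf_XI_given_XF n f' g'"
      unfolding cond_cdf_XI_given_XF_def sawtooth_slice_integral_def deq ..
    from nice.nice_main[OF nice]
    show "(\<forall>s\<in>{0..1/(4 * Am)}. continuous_on {0..1} (cond_cdf_XI_given_XF n f g s)) \<and>
      (\<forall>s1\<in>{0..1/(4 * Am)}. \<forall>s2\<in>{0..1/(4 * Am)}. \<forall>t\<in>{0..1}.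
         \<bar>cond_cdf_XI_given_XF n f g s1 t - cond_cdf_XI_given_XF n f g s2 t\<bar> \<le> (2 * (Am * Am) / (1/(16*Am) * (1/(4*Am)))) * \<bar>s1 - s2\<bar>)"
      unfolding ceq unfolding nk .
    qed
  qed
qed

end
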